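(* In the setting of Problem A with $m>0$ and $0<\underline\theta<\overline\theta$, let $z\in\mathcal H_0$ and $w\in\mathcal H$ with $w\notin(A+B+C+D)(Gz)$. Then the bracketing/bisection procedure (see context), started from any $\rho^0>0$, terminates after finitely many steps and returns $(\rho,x,y)$ with $\rho>0$ and $x\in\mathcal H$ satisfying (5.3)–(5.4), and $y=(Gz-x)/\rho+w+[B(x)-B(Gz)]+[D(x)-D_{(Gz)}(x)]$.
   Context: Problem A setting: $\mathcal H_0,\mathcal H$ real Hilbert spaces; $A:\mathcal H\rightrightarrows\mathcal H$ maximal monotone; $B:\mathcal H\to\mathcal H$ monotone and $\ell$-Lipschitz ($\ell\ge0$); $C:\mathcal H\to\mathcal H$ $\beta$-cocoercive with $\beta\in(0,\infty]$, i.e. $\langle x-y,Cx-Cy\rangle\ge\beta\|Cx-Cy\|^2$ (with $1/\infty=0$); $D:\mathcal H\to\mathcal H$ monotone and continuously differentiable with $m$-Lipschitz derivative $D'$; $G:\mathcal H_0\to\mathcal H$ bounded linear. For $u\in\mathcal H$, $D_{(u)}(x):=D(u)+D'(u)(x-u)$. For a maximal monotone $S$, $J_S:=(S+I)^{-1}$. Given $\hat\delta>0$ and $0<\underline\theta<\overline\theta$, Problem A asks, for given $z\in\mathcal H_0$, $w\in\mathcal H$, for $\rho>0$ and $x\in\mathcal H$ with (5.3) $x=J_{\rho(A+D_{(Gz)})}\big(Gz+\rho w-\rho(B+C)(Gz)\big)$ and (5.4) $\underline\theta\le4\ell^2\rho^2+(\beta^{-1}+\hat\delta)\rho+(m\rho\|x-Gz\|)^2\le\overline\theta$.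 Bracketing/bisection procedure: for $\rho>0$ let $x(\rho):=J_{\rho(A+D_{(Gz)})}\big(Gz+\rho w-\rho(B+C)(Gz)\big)$ and $q(\rho):=4\ell^2\rho^2+(\beta^{-1}+\hat\delta)\rho+(m\rho\|x(\rho)-Gz\|)^2$. Given $\rho^0>0$: if $\underline\theta\le q(\rho^0)\le\overline\theta$, return $\rho=\rho^0$. If $q(\rho^0)<\underline\theta$, set $t_-=\rho^0$, $t_+=\rho^0\overline\theta/q(\rho^0)$; if $q(\rho^0)>\overline\theta$, set $t_-=\rho^0\underline\theta/q(\rho^0)$, $t_+=\rho^0$. Then repeat: set $\tilde\rho=\sqrt{t_-t_+}$; if $\underline\theta\le q(\tilde\rho)\le\overline\theta$, return $\rho=\tilde\rho$; if $q(\tilde\rho)>\overline\theta$ set $t_+=\tilde\rho$; if $q(\tilde\rho)<\underline\theta$ set $t_-=\tilde\rho$. On return with $\rho$, output $x=x(\rho)$ and $y=(Gz-x)/\rho+w+[B(x)-B(Gz)]+[D(x)-D_{(Gz)}(x)]$. *)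

theory Defs
  imports "HOL-Analysis.Analysis"
begin

definition monotone_op :: "('b::real_inner \<Rightarrow> 'b set) \<Rightarrow> bool" where
  "monotone_op S \<longleftrightarrow> (\<forall>x y u v. u \<in> S x \<longrightarrow> v \<in> S y \<longrightarrow> 0 \<le> inner (x - y) (u - v))"

definition maximal_monotone :: "('b::real_inner \<Rightarrow> 'b set) \<Rightarrow> bool" where
  "maximal_monotone S \<longleftrightarrow> monotone_op S \<and>
     (\<forall>x u. (\<forall>y v. v \<in> S y \<longrightarrow> 0 \<le> inner (x - y) (u - v)) \<longrightarrow> u \<in> S x)"

text \<open>Resolvent \<open>J_S = (S + I)^{-1}\<close>, evaluated at v (single-valued for maximal monotone S).\<close>
definition resolvent :: "('b::real_inner \<Rightarrow> 'b set) \<Rightarrow> 'b \<Rightarrow> 'b" where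
  "resolvent S v = (THE x. v - x \<in> S x)"

definition linearize :: "('b::real_normed_vector \<Rightarrow> 'b) \<Rightarrow> ('b \<Rightarrow> 'b \<Rightarrow>\<^sub>L 'b) \<Rightarrow> 'b \<Rightarrow> 'b \<Rightarrow> 'b" where
  "linearize D D' u x = D u + blinfun_apply (D' u) (x - u)"

definition scaled_sum_op :: "real \<Rightarrow> ('b::real_inner \<Rightarrow> 'b set) \<Rightarrow> ('b \<Rightarrow> 'b) \<Rightarrow> 'b \<Rightarrow> 'b set" where
  "scaled_sum_op \<rho> A L x = {\<rho> *\<^sub>R (a + L x) | a. a \<in> A x}"

definition xfun :: "('b::real_inner \<Rightarrow> 'b set) \<Rightarrow> ('b \<Rightarrow> 'b) \<Rightarrow> ('b \<Rightarrow> 'b) \<Rightarrow> ('b \<Rightarrow> 'b)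
   \<Rightarrow> ('b \<Rightarrow> 'b \<Rightarrow>\<^sub>L 'b) \<Rightarrow> ('a \<Rightarrow> 'b) \<Rightarrow> 'a \<Rightarrow> 'b \<Rightarrow> real \<Rightarrow> 'b" where
  "xfun A B C D D' G z w \<rho> =
     resolvent (scaled_sum_op \<rho> A (linearize D D' (G z)))
       (G z + \<rho> *\<^sub>R w - \<rho> *\<^sub>R (B (G z) + C (G z)))"

text \<open>\<open>q(\<rho>) = 4 \<ell>^2 \<rho>^2 + (\<beta>^{-1} + \<hat>\<delta>) \<rho> + (m \<rho> \<parallel>x(\<rho>) - Gz\<parallel>)^2\<close>;
  the parameter \<open>binv\<close> stands for \<open>\<beta>^{-1}\<close> (with \<open>1/\<infinity> = 0\<close>).\<close>
definition qfun :: "real \<Rightarrow> real \<Rightarrow> real \<Rightarrow> real \<Rightarrow> ('b::real_inner) \<Rightarrow> (real \<Rightarrow> 'b) \<Rightarrow> real \<Rightarrow> real" where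
  "qfun l binv dhat m Gz xf \<rho> =
     4 * l^2 * \<rho>^2 + (binv + dhat) * \<rho> + (m * \<rho> * norm (xf \<rho> - Gz))^2"

definition in_band :: "(real \<Rightarrow> real) \<Rightarrow> real \<Rightarrow> real \<Rightarrow> real \<Rightarrow> bool" where
  "in_band q lo hi \<rho> \<longleftrightarrow> lo \<le> q \<rho> \<and> q \<rho> \<le> hi"

text \<open>Initial bracket (used only when \<open>\<rho>0\<close> is not in the band).\<close>
definition bis_init :: "(real \<Rightarrow> real) \<Rightarrow> real \<Rightarrow> real \<Rightarrow> real \<Rightarrow> real \<times> real" where
  "bis_init q lo hi \<rho>0 =
     (if q \<rho>0 < lo then (\<rho>0, \<rho>0 * hi / q \<rho>0) else (\<rho>0 * lo / q \<rho>0, \<rho>0))"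

definition bis_mid :: "real \<times> real \<Rightarrow> real" where
  "bis_mid t = sqrt (fst t * snd t)"

text \<open>One update of the bracket (only applied when the midpoint is not in the band).\<close>
definition bis_step :: "(real \<Rightarrow> real) \<Rightarrow> real \<Rightarrow> real \<Rightarrow> real \<times> real \<Rightarrow> real \<times> real" where
  "bis_step q lo hi t =
     (let r = bis_mid t in
      if hi < q r then (fst t, r) else if q r < lo then (r, snd t) else t)"

definition bis_iter :: "(real \<Rightarrow> real) \<Rightarrow> real \<Rightarrow> real \<Rightarrow> real \<Rightarrow> nat \<Rightarrow> real \<times> real" where
  "bis_iter q lo hi \<rho>0 n = (bis_step q lo hi ^^ n) (bis_init q lo hi \<rho>0)"

definition bisection_returns :: "(real \<Rightarrow> real) \<Rightarrow> real \<Rightarrow> real \<Rightarrow> real \<Rightarrow> real \<Rightarrow> bool" where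
  "bisection_returns q lo hi \<rho>0 \<rho> \<longleftrightarrow>
     (in_band q lo hi \<rho>0 \<and> \<rho> = \<rho>0) \<or>
     (\<not> in_band q lo hi \<rho>0 \<and>
      (\<exists>n. (\<forall>k<n. \<not> in_band q lo hi (bis_mid (bis_iter q lo hi \<rho>0 k))) \<and>
           in_band q lo hi (bis_mid (bis_iter q lo hi \<rho>0 n)) \<and>
           \<rho> = bis_mid (bis_iter q lo hi \<rho>0 n)))"

end

theory Submission
  imports Defs
begin

lemma hull_ineq:
  fixes P :: "('b::real_inner \<times> 'b \<times> real) set"
  assumes PS: "\<forall>v\<in>P. snd (snd v) = inner (fst v) (fst (snd v))"
    and mono: "\<forall>v\<in>P. \<forall>w\<in>P. 0 \<le> inner (fst v - fst w) (fst (snd v) - fst (snd w))"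
    and p: "p \<in> convex hull P"
  shows "inner (fst p) (fst (snd p)) \<le> snd (snd p)"
proof -
  from p obtain F u where F: "finite F" "F \<subseteq> P" "\<forall>x\<in>F. 0 \<le> u x" "sum u F = 1"
     "(\<Sum>v\<in>F. u v *\<^sub>R v) = p"
    unfolding convex_hull_explicit by blast
  define Y where "Y = (\<Sum>v\<in>F. u v *\<^sub>R fst v)"
  define B where "B = (\<Sum>v\<in>F. u v *\<^sub>R fst (snd v))"
  define S where "S = (\<Sum>v\<in>F. u v * inner (fst v) (fst (snd v)))"
  have pY: "fst p = Y" unfolding Y_def F(5)[symmetric] by (simp add: fst_sum)
  have pB: "fst (snd p) = B" unfolding B_def F(5)[symmetric] by (simp add: fst_sum snd_sum)
  have pS: "snd (snd p) = S"
  proof -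
    have "\<forall>v\<in>F. snd (snd v) = inner (fst v) (fst (snd v))" using F(2) PS by blast
    then show ?thesis unfolding S_def F(5)[symmetric] by (simp add: snd_sum)
  qed
  have "0 \<le> (\<Sum>v\<in>F. \<Sum>w\<in>F. u v * u w * inner (fst v - fst w) (fst (snd v) - fst (snd w)))"
    using F(2,3) mono by (intro sum_nonneg mult_nonneg_nonneg) auto
  also have "\<dots> = (\<Sum>v\<in>F. \<Sum>w\<in>F. u v * u w * inner (fst v) (fst (snd v))
       + u w * u v * inner (fst w) (fst (snd w))
       - u v * u w * inner (fst v) (fst (snd w)) - u w * u v * inner (fst w) (fst (snd v)))"
    by (intro sum.cong refl) (simp add: inner_diff algebra_simps)
  also have "\<dots> = 2 * S - 2 * inner Y B"
  proof -
    have e1: "(\<Sum>v\<in>F. \<Sum>w\<in>F. u v * u w * inner (fst v) (fst (snd v))) = S"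
    proof -
      have "\<And>v. (\<Sum>w\<in>F. u v * u w * inner (fst v) (fst (snd v))) = u v * inner (fst v) (fst (snd v))"
      proof -
        fix v
        have "(\<Sum>w\<in>F. u v * u w * inner (fst v) (fst (snd v))) = (\<Sum>w\<in>F. (u v * inner (fst v) (fst (snd v))) * u w)"
          by (simp only: mult_ac)
        also have "\<dots> = (u v * inner (fst v) (fst (snd v))) * sum u F" by (simp only: sum_distrib_left)
        finally show "?thesis v" using F(4) by simp
      qed
      then show ?thesis unfolding S_def by simp
    qed
    have e2: "(\<Sum>v\<in>F. \<Sum>w\<in>F. u w * u v * inner (fst w) (fst (snd w))) = S"
      using e1 by (subst sum.swap) simp
    have e3: "(\<Sum>v\<in>F. \<Sum>w\<in>F. u v * u w * inner (fst v) (fst (snd w))) = inner Y B"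
      unfolding Y_def B_def by (simp only: inner_sum_left inner_sum_right inner_scaleR_left inner_scaleR_right sum_distrib_left, subst sum.swap, simp only: mult_ac)
    have e4: "(\<Sum>v\<in>F. \<Sum>w\<in>F. u w * u v * inner (fst w) (fst (snd v))) = inner Y B"
      using e3 by (subst sum.swap) simp
    show ?thesis
      by (simp add: sum.distrib sum_subtractf e1 e2 e3 e4)
  qed
  finally show ?thesis using pY pB pS by simp
qed

definition gq :: "('b::real_inner \<times> 'b \<times> real) \<Rightarrow> real" where
  "gq p = - (power (norm (fst p - fst (snd p))) 2) / 4 - snd (snd p)"

lemma gq_pert:
  fixes p :: "'b::real_inner \<times> 'b \<times> real"
  shows "gq ((1-t) *\<^sub>R p + t *\<^sub>R (y, b, inner y b)) =
    (1-t) * gq p + t * inner ((1/2) *\<^sub>R (fst p - fst (snd p)) - y) ((1/2) *\<^sub>R (fst p - fst (snd p)) + b)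
    - t^2 * (norm ((fst p - fst (snd p)) + b - y))^2 / 4"
proof -
  obtain Y B S where p: "p = (Y, B, S)" by (cases p) auto
  show ?thesis unfolding p gq_def power2_norm_eq_inner
    by (simp add: inner_add_left inner_add_right inner_diff_left inner_diff_right
        power2_eq_square algebra_simps inner_commute) (simp add: field_simps)
qed

lemma gq_mid:
  fixes p q :: "'b::real_inner \<times> 'b \<times> real"
  shows "gq ((1/2) *\<^sub>R p + (1/2) *\<^sub>R q) = (gq p + gq q)/2
    + (norm ((fst p - fst (snd p)) - (fst q - fst (snd q))))^2 / 16"
proof -
  obtain Y B S where p: "p = (Y, B, S)" by (cases p) auto
  obtain Y' B' S' where q: "q = (Y', B', S')" by (cases q) auto
  show ?thesis unfolding p q gq_def power2_norm_eq_inner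
    by (simp add: inner_add_left inner_add_right inner_diff_left inner_diff_right
        power2_eq_square algebra_simps inner_commute) (simp add: field_simps)
qed

lemma gq_hull_le0:
  fixes M :: "('b::real_inner \<times> 'b) set"
  assumes mono: "\<forall>(y,b)\<in>M. \<forall>(y',b')\<in>M. 0 \<le> inner (y - y') (b - b')"
    and p: "p \<in> convex hull ((\<lambda>(y,b). (y, b, inner y b)) ` M)"
  shows "gq p \<le> 0"
proof -
  have m2: "\<And>y b y' b'. (y,b)\<in>M \<Longrightarrow> (y',b')\<in>M \<Longrightarrow> 0 \<le> inner (y - y') (b - b')"
    using mono by fastforce
  have "inner (fst p) (fst (snd p)) \<le> snd (snd p)"
    by (rule hull_ineq[OF _ _ p]) (auto intro: m2)
  moreover have "(norm (fst p - fst (snd p)))^2 + 4 * inner (fst p) (fst (snd p)) = (norm (fst p + fst (snd p)))^2"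
    unfolding power2_norm_eq_inner by (simp add: inner_add_left inner_add_right inner_diff_left inner_diff_right inner_commute)
  moreover have "0 \<le> (norm (fst p + fst (snd p)))^2" by simp
  ultimately show ?thesis unfolding gq_def by linarith
qed

lemma minty_core:
  fixes M :: "('b::{real_inner,complete_space} \<times> 'b) set"
  assumes mono: "\<forall>(y,b)\<in>M. \<forall>(y',b')\<in>M. 0 \<le> inner (y - y') (b - b')"
  shows "\<exists>x. \<forall>(y,b)\<in>M. inner (x - y) (x + b) \<le> 0"
proof (cases "M = {}")
  case True then show ?thesis by auto
next
  case False
  define P where "P = (\<lambda>(y,b). (y, b, inner y b)) ` M"
  define K where "K = convex hull P"
  have PK: "P \<subseteq> K" unfolding K_def by (rule hull_subset)
  have Kne: "K \<noteq> {}" using False PK unfolding P_def by auto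
  have convK: "convex K" unfolding K_def by simp
  have gle: "\<And>p. p \<in> K \<Longrightarrow> gq p \<le> 0" unfolding K_def P_def by (rule gq_hull_le0[OF mono])
  define Gs where "Gs = Sup (gq ` K)"
  have bdd: "bdd_above (gq ` K)" using gle by (auto intro!: bdd_aboveI[of _ 0])
  have upper: "\<And>p. p \<in> K \<Longrightarrow> gq p \<le> Gs" unfolding Gs_def by (rule cSup_upper) (use bdd in auto)
  have Gs0: "Gs \<le> 0" unfolding Gs_def using Kne gle by (intro cSup_least) auto
  define eps where "eps = (\<lambda>n::nat. 1 / (real n + 1))"
  have eps_pos: "\<And>n. 0 < eps n" unfolding eps_def by simp
  have "\<forall>n. \<exists>p\<in>K. Gs - eps n < gq p"
  proof
    fix n
    have "Gs - eps n < Gs" using eps_pos[of n] by simp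
    then show "\<exists>p\<in>K. Gs - eps n < gq p" unfolding Gs_def
      using less_cSup_iff[of "gq ` K"] Kne bdd by auto
  qed
  then obtain p where pK: "\<And>n. p n \<in> K" and pg: "\<And>n. Gs - eps n < gq (p n)" by metis
  define xs where "xs = (\<lambda>n. (1/2) *\<^sub>R (fst (p n) - fst (snd (p n))))"
  have dist_bd: "(norm (xs n - xs m))^2 \<le> 2 * (eps n + eps m)" for n m
  proof -
    have "(1/2) *\<^sub>R p n + (1/2) *\<^sub>R p m \<in> K" using convK pK by (intro convexD) auto
    then have "gq ((1/2) *\<^sub>R p n + (1/2) *\<^sub>R p m) \<le> Gs" by (rule upper)
    then have a: "(norm ((fst (p n) - fst (snd (p n))) - (fst (p m) - fst (snd (p m)))))^2 / 16
        \<le> Gs - (gq (p n) + gq (p m))/2" unfolding gq_mid by linarith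
    have "xs n - xs m = (1/2) *\<^sub>R ((fst (p n) - fst (snd (p n))) - (fst (p m) - fst (snd (p m))))"
      unfolding xs_def by (simp add: algebra_simps)
    then have b: "(norm (xs n - xs m))^2 = (norm ((fst (p n) - fst (snd (p n))) - (fst (p m) - fst (snd (p m)))))^2 / 4"
      by (simp add: power2_eq_square)
    define dd where "dd = (norm ((fst (p n) - fst (snd (p n))) - (fst (p m) - fst (snd (p m)))))^2"
    have "dd / 16 \<le> Gs - (gq (p n) + gq (p m))/2" "(norm (xs n - xs m))^2 = dd / 4"
      using a b unfolding dd_def by auto
    have h1: "Gs - (gq (p n) + gq (p m))/2 < (eps n + eps m)/2" using pg[of n] pg[of m] by argo
    show ?thesis using h1 \<open>dd / 16 \<le> Gs - (gq (p n) + gq (p m))/2\<close> \<open>(norm (xs n - xs m))^2 = dd / 4\<close> by argo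
  qed
  have "Cauchy xs"
  proof (rule CauchyI)
    fix e :: real assume e: "0 < e"
    obtain N :: nat where N: "4 / e^2 < real N" using reals_Archimedean2 by blast
    have "4 / (real N + 1) < e^2"
    proof -
      have "4 < e^2 * real N" using N e by (simp add: field_simps)
      also have "\<dots> \<le> e^2 * (real N + 1)" using e by simp
      finally show ?thesis by (simp add: field_simps)
    qed
    show "\<exists>M. \<forall>m\<ge>M. \<forall>n\<ge>M. norm (xs m - xs n) < e"
    proof (intro exI allI impI)
      fix m n assume mn: "N \<le> m" "N \<le> n"
      have "eps m \<le> 1 / (real N + 1)" "eps n \<le> 1 / (real N + 1)"
        unfolding eps_def using mn by (auto simp: field_simps)
      moreover have "4 * (1 / (real N + 1)) < e^2" using \<open>4 / (real N + 1) < e^2\<close> by simp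
      ultimately have "(norm (xs m - xs n))^2 < e^2"
        using dist_bd[of m n] by argo
      then show "norm (xs m - xs n) < e" using e by (simp add: power_less_imp_less_base)
    qed
  qed
  then obtain x where xlim: "xs \<longlonglongrightarrow> x" using Cauchy_convergent_iff convergent_def by blast
  have epslim: "eps \<longlonglongrightarrow> 0" unfolding eps_def using LIMSEQ_inverse_real_of_nat_add[of 0]
    by (simp add: inverse_eq_divide add.commute)
  show ?thesis
  proof (intro exI ballI)
    fix yb assume yb: "yb \<in> M"
    obtain y b where ybd: "yb = (y, b)" by (cases yb) auto
    have ybP: "(y, b, inner y b) \<in> K" using yb PK unfolding P_def ybd by auto
    define f where "f = (\<lambda>z. inner (z - y) (z + b))"
    define c where "c = (norm (2 *\<^sub>R x + b - y))^2 / 4"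
    have key: "t * f x \<le> t * Gs + t^2 * c" if t: "0 < t" "t \<le> 1" for t
    proof -
      have ineq: "t * f (xs n) \<le> t * Gs + eps n + t^2 * ((norm (2 *\<^sub>R xs n + b - y))^2 / 4)" for n
      proof -
        have "(1-t) *\<^sub>R p n + t *\<^sub>R (y, b, inner y b) \<in> K"
          using convK pK ybP t by (intro convexD) auto
        then have "gq ((1-t) *\<^sub>R p n + t *\<^sub>R (y, b, inner y b)) \<le> Gs" by (rule upper)
        moreover have "2 *\<^sub>R xs n = fst (p n) - fst (snd (p n))" unfolding xs_def by simp
        ultimately have h: "(1-t) * gq (p n) + t * f (xs n) - t^2 * (norm (2 *\<^sub>R xs n + b - y))^2 / 4 \<le> Gs"
          unfolding gq_pert f_def xs_def by simp
        have "(1-t) * (Gs - eps n) \<le> (1-t) * gq (p n)" using pg[of n] t by (intro mult_left_mono) auto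
        moreover have "(1-t) * eps n \<le> eps n" using t eps_pos[of n] by (simp add: mult_le_cancel_right1)
        ultimately show ?thesis using h by (simp add: algebra_simps)
      qed
      have l1: "(\<lambda>n. t * f (xs n)) \<longlonglongrightarrow> t * f x" unfolding f_def
        by (intro tendsto_intros xlim)
      have l2: "(\<lambda>n. t * Gs + eps n + t^2 * ((norm (2 *\<^sub>R xs n + b - y))^2 / 4)) \<longlonglongrightarrow> t * Gs + 0 + t^2 * c"
        unfolding c_def by (intro tendsto_intros xlim epslim) auto
      show ?thesis using LIMSEQ_le[OF l1 l2] ineq by auto
    qed
    have c0: "0 \<le> c" unfolding c_def by simp
    have "f x \<le> Gs"
    proof (rule ccontr)
      assume "\<not> f x \<le> Gs"
      then have d: "0 < f x - Gs" by simp
      define t where "t = min 1 ((f x - Gs) / (c + 1))"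
      have t: "0 < t" "t \<le> 1" unfolding t_def using d c0 by auto
      have "t * c < f x - Gs"
      proof -
        have "t * c \<le> ((f x - Gs) / (c + 1)) * c" unfolding t_def using c0 d
          by (intro mult_right_mono) auto
        also have "\<dots> < f x - Gs" using d c0 by (simp add: field_simps)
        finally show ?thesis .
      qed
      moreover have "f x \<le> Gs + t * c"
      proof -
        have "t * f x \<le> t * (Gs + t * c)" using key[OF t] by (simp add: power2_eq_square algebra_simps)
        then show ?thesis using t by (simp add: mult_le_cancel_left_pos)
      qed
      ultimately show False by linarith
    qed
    then show "case yb of (y, b) \<Rightarrow> inner (x - y) (x + b) \<le> 0" using Gs0 unfolding ybd f_def by simp
  qed
qed

lemma resolvent_exists:
  fixes A :: "'b::{real_inner,complete_space} \<Rightarrow> 'b set"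
  assumes mm: "maximal_monotone A" and mu: "0 < \<mu>"
  shows "\<exists>x. (1/\<mu>) *\<^sub>R (w - x) \<in> A x"
proof -
  define M where "M = {(y, \<mu> *\<^sub>R b - w) | y b. b \<in> A y}"
  have mo: "monotone_op A" using mm unfolding maximal_monotone_def by simp
  have "\<forall>(y,b)\<in>M. \<forall>(y',b')\<in>M. 0 \<le> inner (y - y') (b - b')"
  proof (clarify)
    fix y b y' b' assume "(y,b) \<in> M" "(y',b') \<in> M"
    then obtain c c' where c: "b = \<mu> *\<^sub>R c - w" "c \<in> A y" "b' = \<mu> *\<^sub>R c' - w" "c' \<in> A y'"
      unfolding M_def by blast
    have "0 \<le> inner (y - y') (c - c')" using mo c unfolding monotone_op_def by blast
    moreover have "inner (y - y') (b - b') = \<mu> * inner (y - y') (c - c')"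
      unfolding c by (simp add: algebra_simps inner_diff_right)
    ultimately show "0 \<le> inner (y - y') (b - b')" using mu by simp
  qed
  from minty_core[OF this] obtain x where x: "\<forall>(y,b)\<in>M. inner (x - y) (x + b) \<le> 0" by blast
  have "\<forall>y v. v \<in> A y \<longrightarrow> 0 \<le> inner (x - y) ((1/\<mu>) *\<^sub>R (w - x) - v)"
  proof (intro allI impI)
    fix y v assume v: "v \<in> A y"
    then have "(y, \<mu> *\<^sub>R v - w) \<in> M" unfolding M_def by blast
    then have h: "inner (x - y) (x + (\<mu> *\<^sub>R v - w)) \<le> 0" using x by auto
    have "(1/\<mu>) *\<^sub>R (w - x) - v = - (1/\<mu>) *\<^sub>R (x + (\<mu> *\<^sub>R v - w))"
      using mu by (simp add: algebra_simps)
    then have "inner (x - y) ((1/\<mu>) *\<^sub>R (w - x) - v) = - (1/\<mu>) * inner (x - y) (x + (\<mu> *\<^sub>R v - w))"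
      by simp
    then show "0 \<le> inner (x - y) ((1/\<mu>) *\<^sub>R (w - x) - v)" using h mu
      by (simp add: divide_nonpos_pos)
  qed
  then show ?thesis using mm unfolding maximal_monotone_def by blast
qed

lemma resolvent_nonexp:
  fixes A :: "'b::real_inner \<Rightarrow> 'b set"
  assumes mo: "monotone_op A" and mu: "0 < \<mu>"
    and h1: "(1/\<mu>) *\<^sub>R (w1 - x1) \<in> A x1" and h2: "(1/\<mu>) *\<^sub>R (w2 - x2) \<in> A x2"
  shows "norm (x1 - x2) \<le> norm (w1 - w2)"
proof -
  have "0 \<le> inner (x1 - x2) ((1/\<mu>) *\<^sub>R (w1 - x1) - (1/\<mu>) *\<^sub>R (w2 - x2))"
    using mo h1 h2 unfolding monotone_op_def by blast
  also have "\<dots> = (1/\<mu>) * (inner (x1 - x2) (w1 - w2) - inner (x1 - x2) (x1 - x2))"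
    by (simp add: algebra_simps inner_diff_right flip: scaleR_diff_right)
  finally have "inner (x1 - x2) (x1 - x2) \<le> inner (x1 - x2) (w1 - w2)" using mu
    by (simp add: zero_le_divide_iff)
  also have "\<dots> \<le> norm (x1 - x2) * norm (w1 - w2)" by (rule norm_cauchy_schwarz)
  finally have "norm (x1 - x2) * norm (x1 - x2) \<le> norm (x1 - x2) * norm (w1 - w2)"
    by (simp add: power2_norm_eq_inner[symmetric] power2_eq_square)
  then show ?thesis
    by (cases "norm (x1 - x2) = 0") (auto simp: mult_le_cancel_left)
qed

lemma contraction_est:
  fixes T :: "'b::real_inner \<Rightarrow>\<^sub>L 'b"
  assumes Tmono: "\<forall>h. 0 \<le> inner h (T h)" and rho: "0 < \<rho>"
    and g: "\<gamma> = 1 / (1 + \<rho>^2 * (norm T)^2)"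
  shows "norm (h - \<gamma> *\<^sub>R h - (\<gamma> * \<rho>) *\<^sub>R T h) \<le> sqrt (1 - \<gamma>) * norm h"
proof -
  define K where "K = norm T"
  have gpos: "0 < \<gamma>" "\<gamma> \<le> 1" proof -
    have d: "1 \<le> 1 + \<rho>^2 * (norm T)^2" by simp
    have aux: "\<And>D::real. 1 \<le> D \<Longrightarrow> 0 < 1/D \<and> 1/D \<le> 1" by auto
    from aux[OF d] show "0 < \<gamma>" "\<gamma> \<le> 1" unfolding g by auto
  qed
  have aux2: "\<And>a::real. 0 \<le> a \<Longrightarrow> 1/(1+a) * a = 1 - 1/(1+a)"
  proof -
    fix a :: real assume "0 \<le> a"
    then have ne: "1 + a \<noteq> 0" by simp
    have "1 - 1/(1+a) = (1+a)/(1+a) - 1/(1+a)" using ne by simp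
    also have "\<dots> = ((1+a) - 1)/(1+a)" by (rule diff_divide_distrib[symmetric])
    finally have "1 - 1/(1+a) = ((1+a) - 1)/(1+a)" .
    then show "1/(1+a) * a = 1 - 1/(1+a)" by simp
  qed
  have gK: "\<gamma> * (\<rho>^2 * K^2) = 1 - \<gamma>" unfolding g K_def by (rule aux2) simp
  have z: "h - \<gamma> *\<^sub>R h - (\<gamma> * \<rho>) *\<^sub>R T h = (1 - \<gamma>) *\<^sub>R h - (\<gamma> * \<rho>) *\<^sub>R T h"
    by (simp add: algebra_simps)
  have Th: "norm (T h) \<le> K * norm h" unfolding K_def by (rule norm_blinfun)
  have Th2: "(norm (T h))^2 \<le> K^2 * (norm h)^2"
    using Th by (metis norm_ge_zero power_mono power_mult_distrib)
  have "(norm ((1 - \<gamma>) *\<^sub>R h - (\<gamma> * \<rho>) *\<^sub>R T h))^2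
      = (1-\<gamma>)^2 * (norm h)^2 - 2 * ((1-\<gamma>) * (\<gamma> * \<rho>)) * inner h (T h) + (\<gamma> * \<rho>)^2 * (norm (T h))^2"
    unfolding power2_norm_eq_inner
    by (simp add: inner_diff_left inner_diff_right inner_commute power2_eq_square algebra_simps)
  also have "\<dots> \<le> (1-\<gamma>)^2 * (norm h)^2 + (\<gamma> * \<rho>)^2 * (K^2 * (norm h)^2)"
  proof -
    have "0 \<le> ((1-\<gamma>) * (\<gamma> * \<rho>)) * inner h (T h)" using gpos rho Tmono by simp
    moreover have "(\<gamma> * \<rho>)^2 * (norm (T h))^2 \<le> (\<gamma> * \<rho>)^2 * (K^2 * (norm h)^2)"
      using Th2 by (intro mult_left_mono) auto
    ultimately show ?thesis by linarith
  qed
  also have "\<dots> = ((1-\<gamma>)^2 + \<gamma> * (\<gamma> * (\<rho>^2 * K^2))) * (norm h)^2"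
    by (simp add: power2_eq_square algebra_simps)
  also have "\<dots> = (1 - \<gamma>) * (norm h)^2" unfolding gK by (simp add: power2_eq_square algebra_simps)
  also have "\<dots> = (sqrt (1 - \<gamma>) * norm h)^2" using gpos by (simp add: power_mult_distrib)
  finally have "(norm ((1 - \<gamma>) *\<^sub>R h - (\<gamma> * \<rho>) *\<^sub>R T h))^2 \<le> (sqrt (1 - \<gamma>) * norm h)^2" .
  then have "norm ((1 - \<gamma>) *\<^sub>R h - (\<gamma> * \<rho>) *\<^sub>R T h) \<le> sqrt (1 - \<gamma>) * norm h" by (rule power2_le_imp_le) (use gpos in auto)
  then show ?thesis unfolding z .
qed

lemma affine_solve:
  fixes A :: "'b::{real_inner,complete_space} \<Rightarrow> 'b set" and T :: "'b \<Rightarrow>\<^sub>L 'b"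
  assumes mm: "maximal_monotone A" and rho: "0 < \<rho>" and Tmono: "\<forall>h. 0 \<le> inner h (T h)"
  shows "\<exists>x. (1/\<rho>) *\<^sub>R (v0 - x) - T x - k \<in> A x"
proof -
  define \<gamma> where "\<gamma> = 1 / (1 + \<rho>^2 * (norm T)^2)"
  have gpos: "0 < \<gamma>" "\<gamma> \<le> 1" proof -
    have d: "1 \<le> 1 + \<rho>^2 * (norm T)^2" by simp
    have aux: "\<And>D::real. 1 \<le> D \<Longrightarrow> 0 < 1/D \<and> 1/D \<le> 1" by auto
    from aux[OF d] show "0 < \<gamma>" "\<gamma> \<le> 1" unfolding \<gamma>_def by auto
  qed
  define \<mu> where "\<mu> = \<gamma> * \<rho>"
  have mu: "0 < \<mu>" unfolding \<mu>_def using gpos rho by simp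
  define J where "J = (\<lambda>w. SOME x. (1/\<mu>) *\<^sub>R (w - x) \<in> A x)"
  have J: "\<And>w. (1/\<mu>) *\<^sub>R (w - J w) \<in> A (J w)"
    unfolding J_def by (rule someI_ex) (rule resolvent_exists[OF mm mu])
  have mo: "monotone_op A" using mm unfolding maximal_monotone_def by simp
  define F where "F = (\<lambda>x. x - \<gamma> *\<^sub>R (x + \<rho> *\<^sub>R (T x + k) - v0))"
  have Fd: "F x - F y = (x - y) - \<gamma> *\<^sub>R (x - y) - (\<gamma> * \<rho>) *\<^sub>R T (x - y)" for x y
    unfolding F_def by (simp add: algebra_simps blinfun.diff_right)
  have "\<forall>x y. dist (J (F x)) (J (F y)) \<le> sqrt (1 - \<gamma>) * dist x y"
  proof (intro allI)
    fix x y
    have "dist (J (F x)) (J (F y)) \<le> norm (F x - F y)"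
      unfolding dist_norm by (rule resolvent_nonexp[OF mo mu J J])
    also have "\<dots> \<le> sqrt (1 - \<gamma>) * norm (x - y)" unfolding Fd
      by (rule contraction_est[OF Tmono rho \<gamma>_def])
    finally show "dist (J (F x)) (J (F y)) \<le> sqrt (1 - \<gamma>) * dist x y" by (simp add: dist_norm)
  qed
  moreover have "sqrt (1 - \<gamma>) < 1" using gpos by simp
  moreover have "0 \<le> sqrt (1 - \<gamma>)" using gpos by simp
  ultimately obtain x where fx: "J (F x) = x" using banach_fix_type[of "sqrt (1 - \<gamma>)" "\<lambda>x. J (F x)"] by blast
  have "(1/\<mu>) *\<^sub>R (F x - x) \<in> A x" using J[of "F x"] unfolding fx .
  moreover have "(1/\<mu>) *\<^sub>R (F x - x) = (1/\<rho>) *\<^sub>R (v0 - x) - T x - k"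
  proof -
    have "F x - x = - \<gamma> *\<^sub>R (x + \<rho> *\<^sub>R (T x + k) - v0)" unfolding F_def by simp
    then have "(1/\<mu>) *\<^sub>R (F x - x) = - (1/\<rho>) *\<^sub>R (x + \<rho> *\<^sub>R (T x + k) - v0)"
    proof -
      have "(1/\<mu>) *\<^sub>R (F x - x) = ((1/\<mu>) * (- \<gamma>)) *\<^sub>R (x + \<rho> *\<^sub>R (T x + k) - v0)"
        unfolding \<open>F x - x = _\<close> by (simp only: scaleR_scaleR)
      moreover have "(1/\<mu>) * (- \<gamma>) = - (1/\<rho>)" unfolding \<mu>_def using gpos rho by simp
      ultimately show ?thesis by simp
    qed
    also have "\<dots> = (1/\<rho>) *\<^sub>R (v0 - x) - T x - k"
    proof -
      have "- (1/\<rho>) *\<^sub>R (x + \<rho> *\<^sub>R (T x + k) - v0) = (1/\<rho>) *\<^sub>R (v0 - x) - ((1/\<rho>) * \<rho>) *\<^sub>R (T x + k)"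
        by (simp add: scaleR_diff_right scaleR_add_right)
      then show ?thesis using rho by simp
    qed
    finally show ?thesis .
  qed
  ultimately show ?thesis by auto
qed

lemma deriv_mono:
  fixes D :: "'b::real_inner \<Rightarrow> 'b" and D' :: "'b \<Rightarrow>\<^sub>L 'b"
  assumes Dm: "\<forall>x y. 0 \<le> inner (x - y) (D x - D y)"
    and Dd: "(D has_derivative blinfun_apply D') (at u)"
  shows "0 \<le> inner h (D' h)"
proof (rule ccontr)
  assume neg: "\<not> 0 \<le> inner h (D' h)"
  define \<phi> where "\<phi> = (\<lambda>t::real. inner h (D (u + t *\<^sub>R h)))"
  have d1: "((\<lambda>t::real. u + t *\<^sub>R h) has_derivative (\<lambda>t. t *\<^sub>R h)) (at 0)"
    by (auto intro!: derivative_eq_intros)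
  have d2: "(D has_derivative blinfun_apply D') (at (u + (0::real) *\<^sub>R h))" using Dd by simp
  have "((\<lambda>t. D (u + t *\<^sub>R h)) has_derivative (\<lambda>t. D' (t *\<^sub>R h))) (at 0)"
    by (rule has_derivative_compose[OF d1 d2])
  then have "(\<phi> has_derivative (\<lambda>t. inner h (D' (t *\<^sub>R h)))) (at 0)"
    unfolding \<phi>_def by (rule has_derivative_inner_right)
  moreover have "(\<lambda>t. inner h (D' (t *\<^sub>R h))) = (*) (inner h (D' h))"
    by (rule ext) (simp add: blinfun.scaleR_right mult.commute)
  ultimately have "(\<phi> has_field_derivative inner h (D' h)) (at 0)"
    unfolding has_field_derivative_def by simp
  from DERIV_neg_dec_right[OF this] neg obtain d where d: "d > 0"
    and dd: "\<forall>t>0. t < d \<longrightarrow> \<phi> 0 > \<phi> (0 + t)" by force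
  define t where "t = d / 2"
  have t: "0 < t" "t < d" unfolding t_def using d by auto
  have "0 \<le> inner ((u + t *\<^sub>R h) - u) (D (u + t *\<^sub>R h) - D u)" using Dm by blast
  then have "0 \<le> t * inner h (D (u + t *\<^sub>R h) - D u)" by simp
  then have "0 \<le> inner h (D (u + t *\<^sub>R h) - D u)" using t by (simp add: zero_le_mult_iff)
  then have "\<phi> 0 \<le> \<phi> t" unfolding \<phi>_def by (simp add: inner_diff_right)
  with dd t show False by auto
qed

lemma resolvent_unique:
  fixes A :: "'b::real_inner \<Rightarrow> 'b set" and T :: "'b \<Rightarrow>\<^sub>L 'b"
  assumes mo: "monotone_op A" and Tmono: "\<forall>h. 0 \<le> inner h (T h)" and rho: "0 < \<rho>"
    and L: "\<forall>x. L x = T x + k"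
    and h1: "v0 - x1 \<in> scaled_sum_op \<rho> A L x1" and h2: "v0 - x2 \<in> scaled_sum_op \<rho> A L x2"
  shows "x1 = x2"
proof -
  obtain a1 where a1: "a1 \<in> A x1" "v0 - x1 = \<rho> *\<^sub>R (a1 + L x1)" using h1 unfolding scaled_sum_op_def by blast
  obtain a2 where a2: "a2 \<in> A x2" "v0 - x2 = \<rho> *\<^sub>R (a2 + L x2)" using h2 unfolding scaled_sum_op_def by blast
  have "x2 - x1 = \<rho> *\<^sub>R (a1 - a2) + \<rho> *\<^sub>R T (x1 - x2)"
  proof -
    have "x2 - x1 = (v0 - x1) - (v0 - x2)" by simp
    also have "\<dots> = \<rho> *\<^sub>R (a1 + L x1) - \<rho> *\<^sub>R (a2 + L x2)" using a1 a2 by simp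
    also have "\<dots> = \<rho> *\<^sub>R (a1 - a2) + \<rho> *\<^sub>R T (x1 - x2)"
      using L by (simp add: algebra_simps blinfun.diff_right)
    finally show ?thesis .
  qed
  then have "inner (x1 - x2) (x2 - x1) = \<rho> * inner (x1 - x2) (a1 - a2) + \<rho> * inner (x1 - x2) (T (x1 - x2))"
    by (simp add: inner_add_right)
  moreover have "0 \<le> inner (x1 - x2) (a1 - a2)" using mo a1 a2 unfolding monotone_op_def by blast
  moreover have "0 \<le> inner (x1 - x2) (T (x1 - x2))" using Tmono by blast
  ultimately have "0 \<le> inner (x1 - x2) (x2 - x1)" using rho by simp
  moreover have "inner (x1 - x2) (x2 - x1) = - inner (x1 - x2) (x1 - x2)"
    by (metis inner_minus_right minus_diff_eq)
  ultimately have "inner (x1 - x2) (x1 - x2) \<le> 0" by simp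
  then have "inner (x1 - x2) (x1 - x2) = 0" using inner_ge_zero[of "x1 - x2"] by linarith
  then show ?thesis by simp
qed

lemma resolvent_char:
  fixes A :: "'b::{real_inner,complete_space} \<Rightarrow> 'b set" and T :: "'b \<Rightarrow>\<^sub>L 'b"
  assumes mm: "maximal_monotone A" and Tmono: "\<forall>h. 0 \<le> inner h (T h)" and rho: "0 < \<rho>"
    and L: "\<forall>x. L x = T x + k"
  shows "v0 - resolvent (scaled_sum_op \<rho> A L) v0 \<in> scaled_sum_op \<rho> A L (resolvent (scaled_sum_op \<rho> A L) v0)"
    and "(1/\<rho>) *\<^sub>R (v0 - resolvent (scaled_sum_op \<rho> A L) v0) - T (resolvent (scaled_sum_op \<rho> A L) v0) - k
          \<in> A (resolvent (scaled_sum_op \<rho> A L) v0)"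
proof -
  have mo: "monotone_op A" using mm unfolding maximal_monotone_def by simp
  obtain x where x: "(1/\<rho>) *\<^sub>R (v0 - x) - T x - k \<in> A x" using affine_solve[OF mm rho Tmono] by blast
  have "v0 - x = \<rho> *\<^sub>R (((1/\<rho>) *\<^sub>R (v0 - x) - T x - k) + L x)" using rho L by simp
  then have xs: "v0 - x \<in> scaled_sum_op \<rho> A L x" unfolding scaled_sum_op_def using x by blast
  have R: "resolvent (scaled_sum_op \<rho> A L) v0 = x"
    unfolding resolvent_def
    apply (rule the_equality[of "\<lambda>y. v0 - y \<in> scaled_sum_op \<rho> A L y" x])
     apply (rule xs)
    apply (rule resolvent_unique[OF mo Tmono rho L])
     apply assumption
    apply (rule xs)
    done
  show "v0 - resolvent (scaled_sum_op \<rho> A L) v0 \<in> scaled_sum_op \<rho> A L (resolvent (scaled_sum_op \<rho> A L) v0)"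
    unfolding R by (rule xs)
  show "(1/\<rho>) *\<^sub>R (v0 - resolvent (scaled_sum_op \<rho> A L) v0) - T (resolvent (scaled_sum_op \<rho> A L) v0) - k
          \<in> A (resolvent (scaled_sum_op \<rho> A L) v0)" unfolding R by (rule x)
qed

lemma key_ineq:
  fixes A :: "'b::real_inner \<Rightarrow> 'b set" and T :: "'b \<Rightarrow>\<^sub>L 'b"
  assumes mo: "monotone_op A" and Tmono: "\<forall>h. 0 \<le> inner h (T h)"
    and h1: "(1/\<rho>1) *\<^sub>R (u + \<rho>1 *\<^sub>R v - x1) - T x1 - k \<in> A x1"
    and h2: "(1/\<rho>2) *\<^sub>R (u + \<rho>2 *\<^sub>R v - x2) - T x2 - k \<in> A x2"
    and r: "0 < \<rho>1" "0 < \<rho>2"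
  shows "0 \<le> inner ((x1 - u) - (x2 - u)) ((1/\<rho>2) *\<^sub>R (x2 - u) - (1/\<rho>1) *\<^sub>R (x1 - u))"
proof -
  have m: "0 \<le> inner (x1 - x2) (((1/\<rho>1) *\<^sub>R (u + \<rho>1 *\<^sub>R v - x1) - T x1 - k) - ((1/\<rho>2) *\<^sub>R (u + \<rho>2 *\<^sub>R v - x2) - T x2 - k))"
    using mo h1 h2 unfolding monotone_op_def by blast
  have e: "((1/\<rho>1) *\<^sub>R (u + \<rho>1 *\<^sub>R v - x1) - T x1 - k) - ((1/\<rho>2) *\<^sub>R (u + \<rho>2 *\<^sub>R v - x2) - T x2 - k)
     = ((1/\<rho>2) *\<^sub>R (x2 - u) - (1/\<rho>1) *\<^sub>R (x1 - u)) - T (x1 - x2)"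
    using r by (simp add: algebra_simps blinfun.diff_right)
  have "0 \<le> inner (x1 - x2) (T (x1 - x2))" using Tmono by blast
  then show ?thesis using m unfolding e by (simp add: inner_diff_right)
qed

lemma key_scaled:
  fixes d1 d2 :: "'b::real_inner"
  assumes k: "0 \<le> inner (d1 - d2) ((1/\<rho>2) *\<^sub>R d2 - (1/\<rho>1) *\<^sub>R d1)" and r: "0 < \<rho>1" "0 < \<rho>2"
  shows "0 \<le> inner (d1 - d2) (\<rho>1 *\<^sub>R d2 - \<rho>2 *\<^sub>R d1)"
proof -
  have "(\<rho>1 * \<rho>2) *\<^sub>R ((1/\<rho>2) *\<^sub>R d2 - (1/\<rho>1) *\<^sub>R d1) = \<rho>1 *\<^sub>R d2 - \<rho>2 *\<^sub>R d1"
    using r by (simp add: scaleR_diff_right)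
  then have "inner (d1 - d2) (\<rho>1 *\<^sub>R d2 - \<rho>2 *\<^sub>R d1) = (\<rho>1 * \<rho>2) * inner (d1 - d2) ((1/\<rho>2) *\<^sub>R d2 - (1/\<rho>1) *\<^sub>R d1)"
    by (metis inner_scaleR_right)
  then show ?thesis using k r by simp
qed

lemma key_mono:
  fixes d1 d2 :: "'b::real_inner"
  assumes k: "0 \<le> inner (d1 - d2) ((1/\<rho>2) *\<^sub>R d2 - (1/\<rho>1) *\<^sub>R d1)" and r: "0 < \<rho>1" "\<rho>1 \<le> \<rho>2"
  shows "norm d1 \<le> norm d2"
proof (rule ccontr)
  assume "\<not> norm d1 \<le> norm d2"
  then have ab: "norm d2 < norm d1" by simp
  have r2: "0 < \<rho>2" using r by simp
  have H: "0 \<le> inner (d1 - d2) (\<rho>1 *\<^sub>R d2 - \<rho>2 *\<^sub>R d1)" by (rule key_scaled[OF k r(1) r2])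
  have e: "inner (d1 - d2) (\<rho>1 *\<^sub>R d2 - \<rho>2 *\<^sub>R d1) = (\<rho>1 + \<rho>2) * inner d1 d2 - \<rho>2 * (norm d1)^2 - \<rho>1 * (norm d2)^2"
    unfolding power2_norm_eq_inner by (simp add: inner_diff_left inner_diff_right inner_commute algebra_simps)
  have cs: "inner d1 d2 \<le> norm d1 * norm d2" by (rule norm_cauchy_schwarz)
  have "(\<rho>1 + \<rho>2) * inner d1 d2 \<le> (\<rho>1 + \<rho>2) * (norm d1 * norm d2)" using cs r by (intro mult_left_mono) auto
  then have P: "0 \<le> (\<rho>1 + \<rho>2) * (norm d1 * norm d2) - \<rho>2 * (norm d1)^2 - \<rho>1 * (norm d2)^2" using H e by linarith
  have "(\<rho>2 * norm d1 - \<rho>1 * norm d2) * (norm d1 - norm d2) = - ((\<rho>1 + \<rho>2) * (norm d1 * norm d2) - \<rho>2 * (norm d1)^2 - \<rho>1 * (norm d2)^2)"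
    by (simp add: power2_eq_square algebra_simps)
  moreover have "0 < (\<rho>2 * norm d1 - \<rho>1 * norm d2) * (norm d1 - norm d2)"
  proof (rule mult_pos_pos)
    have "\<rho>1 * norm d2 < \<rho>1 * norm d1" using ab r by simp
    also have "\<dots> \<le> \<rho>2 * norm d1" using r by (intro mult_right_mono) auto
    finally show "0 < \<rho>2 * norm d1 - \<rho>1 * norm d2" by simp
    show "0 < norm d1 - norm d2" using ab by simp
  qed
  ultimately show False using P by linarith
qed

lemma key_bound:
  fixes d1 d2 :: "'b::real_inner"
  assumes k: "0 \<le> inner (d1 - d2) ((1/\<rho>2) *\<^sub>R d2 - (1/\<rho>1) *\<^sub>R d1)" and r: "0 < \<rho>1" "0 < \<rho>2"
  shows "norm (d1 - d2) \<le> \<bar>\<rho>1 - \<rho>2\<bar> * norm d1 / \<rho>1"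
proof -
  have H: "0 \<le> inner (d1 - d2) (\<rho>1 *\<^sub>R d2 - \<rho>2 *\<^sub>R d1)" by (rule key_scaled[OF k r])
  have "\<rho>1 *\<^sub>R d2 - \<rho>2 *\<^sub>R d1 = (\<rho>1 - \<rho>2) *\<^sub>R d1 - \<rho>1 *\<^sub>R (d1 - d2)" by (simp add: algebra_simps)
  then have "inner (d1 - d2) (\<rho>1 *\<^sub>R d2 - \<rho>2 *\<^sub>R d1) = (\<rho>1 - \<rho>2) * inner (d1 - d2) d1 - \<rho>1 * inner (d1 - d2) (d1 - d2)"
    by (simp add: inner_diff_right)
  then have "\<rho>1 * (norm (d1 - d2))^2 \<le> (\<rho>1 - \<rho>2) * inner (d1 - d2) d1"
    using H by (simp add: power2_norm_eq_inner)
  also have "\<dots> \<le> \<bar>\<rho>1 - \<rho>2\<bar> * (norm (d1 - d2) * norm d1)"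
  proof -
    have "(\<rho>1 - \<rho>2) * inner (d1 - d2) d1 \<le> \<bar>(\<rho>1 - \<rho>2) * inner (d1 - d2) d1\<bar>" by simp
    also have "\<dots> = \<bar>\<rho>1 - \<rho>2\<bar> * \<bar>inner (d1 - d2) d1\<bar>" by (simp add: abs_mult)
    also have "\<dots> \<le> \<bar>\<rho>1 - \<rho>2\<bar> * (norm (d1 - d2) * norm d1)"
      by (intro mult_left_mono Cauchy_Schwarz_ineq2) auto
    finally show ?thesis .
  qed
  finally have I: "\<rho>1 * (norm (d1 - d2) * norm (d1 - d2)) \<le> (\<bar>\<rho>1 - \<rho>2\<bar> * norm d1) * norm (d1 - d2)"
    by (simp add: power2_eq_square algebra_simps)
  show ?thesis
  proof (cases "norm (d1 - d2) = 0")
    case True then show ?thesis using r by simp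
  next
    case False
    then have np: "0 < norm (d1 - d2)" by simp
    from I have "(\<rho>1 * norm (d1 - d2)) * norm (d1 - d2) \<le> (\<bar>\<rho>1 - \<rho>2\<bar> * norm d1) * norm (d1 - d2)"
      by (simp add: algebra_simps)
    then have "\<rho>1 * norm (d1 - d2) \<le> \<bar>\<rho>1 - \<rho>2\<bar> * norm d1" using np by simp
    then show ?thesis using r by (simp add: field_simps)
  qed
qed

lemma bis_iter_Suc: "bis_iter q lo hi r0 (Suc k) = bis_step q lo hi (bis_iter q lo hi r0 k)"
  unfolding bis_iter_def by simp

lemma bis_iter_0: "bis_iter q lo hi r0 0 = bis_init q lo hi r0"
  unfolding bis_iter_def by simp

lemma sqrt_mid_bounds:
  fixes a b :: real assumes "0 < a" "a \<le> b"
  shows "a \<le> sqrt (a * b)" "sqrt (a * b) \<le> b" "sqrt (a * b) - a \<le> (b - a) / 2"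
proof -
  have "sqrt (a * a) \<le> sqrt (a * b)" using assms by (intro real_sqrt_le_mono mult_left_mono) auto
  then show "a \<le> sqrt (a * b)" using assms by simp
  have "sqrt (a * b) \<le> sqrt (b * b)" using assms by (intro real_sqrt_le_mono mult_right_mono) auto
  then show "sqrt (a * b) \<le> b" using assms by simp
  have "0 \<le> (sqrt a - sqrt b)^2" by simp
  then have "2 * (sqrt a * sqrt b) \<le> a + b" using assms by (simp add: power2_eq_square algebra_simps)
  then show "sqrt (a * b) - a \<le> (b - a) / 2" by (simp add: real_sqrt_mult)
qed

lemma sqrt_mid_upper:
  fixes a b a0 b0 :: real assumes "0 < a0" "a0 \<le> a" "a \<le> b" "b \<le> b0"
  shows "b - sqrt (a * b) \<le> (sqrt b0 / (sqrt a0 + sqrt b0)) * (b - a)"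
proof -
  define s where "s = sqrt a" define t where "t = sqrt b"
  define S where "S = sqrt a0" define U where "U = sqrt b0"
  have pos: "0 < S" "S \<le> s" "s \<le> t" "t \<le> U" unfolding s_def t_def S_def U_def using assms
    by (auto intro: real_sqrt_le_mono)
  have ab: "a = s^2" "b = t^2" "sqrt (a * b) = s * t" unfolding s_def t_def using assms
    by (auto simp: real_sqrt_mult)
  have "t * S \<le> U * s" using pos by (intro mult_mono) auto
  then have "t * (S + U) \<le> U * (t + s)" by (simp add: algebra_simps)
  then have c: "t \<le> U / (S + U) * (t + s)" using pos by (simp add: field_simps)
  have "b - sqrt (a * b) = t * (t - s)" unfolding ab(3) unfolding ab(1,2) by (simp add: power2_eq_square algebra_simps)
  also have "\<dots> \<le> (U / (S + U) * (t + s)) * (t - s)" using c pos by (intro mult_right_mono) auto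
  also have "\<dots> = U / (S + U) * ((t + s) * (t - s))" by (simp only: mult.assoc)
  also have "(t + s) * (t - s) = b - a" unfolding ab(1,2) by (simp add: power2_eq_square algebra_simps)
  finally show ?thesis unfolding U_def S_def .
qed

lemma frac_bounds:
  fixes S U :: real assumes "0 < S" "S \<le> U"
  shows "1/2 \<le> U / (S + U)" "U / (S + U) < 1" "0 \<le> U / (S + U)"
proof -
  have p: "0 < S + U" using assms by simp
  show "1/2 \<le> U / (S + U)" using p assms by (simp add: field_simps)
  show "U / (S + U) < 1" using p assms by (simp add: field_simps)
  show "0 \<le> U / (S + U)" using p assms by simp
qed

lemma bisection_terminates:
  fixes q :: "real \<Rightarrow> real"
  assumes cont: "continuous_on {0<..} q" and pos: "\<And>r. 0 < r \<Longrightarrow> 0 < q r"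
    and qm: "\<And>r1 r2. 0 < r1 \<Longrightarrow> r1 \<le> r2 \<Longrightarrow> q r1 / r1 \<le> q r2 / r2"
    and lo: "0 < lo" and lohi: "lo < hi" and r0: "0 < \<rho>0"
  shows "\<exists>\<rho>. bisection_returns q lo hi \<rho>0 \<rho> \<and> 0 < \<rho> \<and> in_band q lo hi \<rho>"
proof (cases "in_band q lo hi \<rho>0")
  case True then show ?thesis unfolding bisection_returns_def using r0 by auto
next
  case nb: False
  define a0 where "a0 = fst (bis_init q lo hi \<rho>0)"
  define b0 where "b0 = snd (bis_init q lo hi \<rho>0)"
  have q0: "0 < q \<rho>0" using pos r0 by simp
  have init: "0 < a0 \<and> a0 < b0 \<and> q a0 \<le> lo \<and> hi \<le> q b0"
  proof (cases "q \<rho>0 < lo")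
    case True
    have a: "a0 = \<rho>0" "b0 = \<rho>0 * hi / q \<rho>0" unfolding a0_def b0_def bis_init_def using True by auto
    have "1 < hi / q \<rho>0" using True lohi q0 by (simp add: field_simps)
    then have "\<rho>0 * 1 < \<rho>0 * (hi / q \<rho>0)" using r0 by (intro mult_strict_left_mono) auto
    then have lt: "\<rho>0 < b0" unfolding a by simp
    have "q \<rho>0 / \<rho>0 \<le> q b0 / b0" using qm[OF r0] lt by simp
    moreover have "q \<rho>0 / \<rho>0 = hi / b0" unfolding a using r0 q0 lo lohi by (simp add: field_simps)
    ultimately have "hi / b0 \<le> q b0 / b0" by simp
    then have "hi \<le> q b0" using lt r0 by (simp add: divide_le_cancel)
    then show ?thesis using a lt r0 True by simp
  next
    case False
    then have hi0: "hi < q \<rho>0" using nb unfolding in_band_def by auto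
    have a: "a0 = \<rho>0 * lo / q \<rho>0" "b0 = \<rho>0" unfolding a0_def b0_def bis_init_def using False by auto
    have "lo / q \<rho>0 < 1" using hi0 lohi q0 by (simp add: field_simps)
    then have "\<rho>0 * (lo / q \<rho>0) < \<rho>0 * 1" using r0 by (intro mult_strict_left_mono) auto
    then have lt: "a0 < \<rho>0" unfolding a by simp
    have apos: "0 < a0" unfolding a using r0 q0 lo by simp
    have "q a0 / a0 \<le> q \<rho>0 / \<rho>0" using qm[OF apos] lt by simp
    moreover have "q \<rho>0 / \<rho>0 = lo / a0" unfolding a using r0 q0 lo by (simp add: field_simps)
    ultimately have "q a0 / a0 \<le> lo / a0" by simp
    then have "q a0 \<le> lo" using apos by (simp add: divide_le_cancel)
    then show ?thesis using a lt apos hi0 by simp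
  qed
  define c where "c = sqrt b0 / (sqrt a0 + sqrt b0)"
  have c: "1/2 \<le> c" "c < 1" "0 \<le> c"
  proof -
    have s: "0 < sqrt a0" "sqrt a0 \<le> sqrt b0" using init by auto
    then show "1/2 \<le> c" "c < 1" "0 \<le> c" unfolding c_def by (rule frac_bounds)+
  qed
  define Inv where "Inv = (\<lambda>k (t::real \<times> real). a0 \<le> fst t \<and> fst t \<le> snd t \<and> snd t \<le> b0 \<and>
      q (fst t) \<le> lo \<and> hi \<le> q (snd t) \<and> snd t - fst t \<le> c^k * (b0 - a0))"
  have inv: "Inv k (bis_iter q lo hi \<rho>0 k)" if "\<forall>j<k. \<not> in_band q lo hi (bis_mid (bis_iter q lo hi \<rho>0 j))" for k
    using that
  proof (induction k)
    case 0 then show ?case unfolding Inv_def bis_iter_0 using init unfolding a0_def b0_def by auto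
  next
    case (Suc k)
    then have IH: "Inv k (bis_iter q lo hi \<rho>0 k)" by auto
    obtain a b where ab: "bis_iter q lo hi \<rho>0 k = (a, b)" by (cases "bis_iter q lo hi \<rho>0 k") auto
    have I: "a0 \<le> a" "a \<le> b" "b \<le> b0" "q a \<le> lo" "hi \<le> q b" "b - a \<le> c^k * (b0 - a0)"
      using IH unfolding Inv_def ab by auto
    have apos: "0 < a" using I init by linarith
    define r where "r = sqrt (a * b)"
    have rm: "bis_mid (bis_iter q lo hi \<rho>0 k) = r" unfolding ab bis_mid_def r_def by simp
    have nbk: "\<not> in_band q lo hi r" using Suc.prems rm by auto
    have rb: "a \<le> r" "r \<le> b" "r - a \<le> (b - a) / 2" unfolding r_def using sqrt_mid_bounds[OF apos I(2)] by auto
    have rb2: "b - r \<le> c * (b - a)" unfolding r_def c_def using sqrt_mid_upper[of a0 a b b0] I init by auto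
    have ck: "c * (b - a) \<le> c^(Suc k) * (b0 - a0)" using I(6) c by (simp add: mult_left_mono)
    show ?case
    proof (cases "hi < q r")
      case True
      have "bis_iter q lo hi \<rho>0 (Suc k) = (a, r)" unfolding bis_iter_Suc ab bis_step_def
        using True rm[unfolded ab] by (simp add: Let_def)
      moreover have "r - a \<le> c * (b - a)"
      proof -
        have "(1/2) * (b - a) \<le> c * (b - a)" using c I by (intro mult_right_mono) auto
        then have "(b - a) / 2 \<le> c * (b - a)" by simp
        then show ?thesis using rb by linarith
      qed
      ultimately show ?thesis unfolding Inv_def using I rb True ck by auto
    next
      case False
      then have lr: "q r < lo" using nbk unfolding in_band_def by auto
      have "bis_iter q lo hi \<rho>0 (Suc k) = (r, b)" unfolding bis_iter_Suc ab bis_step_def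
        using False lr rm[unfolded ab] by (simp add: Let_def)
      then show ?thesis unfolding Inv_def using I rb rb2 lr ck by auto
    qed
  qed
  have ex: "\<exists>k. in_band q lo hi (bis_mid (bis_iter q lo hi \<rho>0 k))"
  proof (rule ccontr)
    assume "\<not> ?thesis"
    then have all: "\<And>k. Inv k (bis_iter q lo hi \<rho>0 k)" using inv by auto
    have "continuous_on {a0..b0} q" using init by (intro continuous_on_subset[OF cont]) auto
    then have "uniformly_continuous_on {a0..b0} q" by (rule compact_uniformly_continuous) simp
    then obtain d where d: "d > 0" and dd: "\<forall>x\<in>{a0..b0}. \<forall>x'\<in>{a0..b0}. dist x' x < d \<longrightarrow> dist (q x') (q x) < hi - lo"
      unfolding uniformly_continuous_on_def using lohi by (meson diff_gt_0_iff_gt)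
    have w: "0 < b0 - a0" using init by simp
    obtain k where k: "c^k < d / (b0 - a0)" using real_arch_pow_inv[of "d / (b0 - a0)" c] d w c by auto
    obtain a b where ab: "bis_iter q lo hi \<rho>0 k = (a, b)" by (cases "bis_iter q lo hi \<rho>0 k") auto
    have I: "a0 \<le> a" "a \<le> b" "b \<le> b0" "q a \<le> lo" "hi \<le> q b" "b - a \<le> c^k * (b0 - a0)"
      using all[of k] unfolding Inv_def ab by auto
    have "c^k * (b0 - a0) < d" using k w by (simp add: field_simps)
    then have "dist b a < d" using I by (simp add: dist_real_def)
    then have "dist (q b) (q a) < hi - lo" using dd I by auto
    then show False using I by (simp add: dist_real_def)
  qed
  define n where "n = (LEAST k. in_band q lo hi (bis_mid (bis_iter q lo hi \<rho>0 k)))"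
  have n1: "in_band q lo hi (bis_mid (bis_iter q lo hi \<rho>0 n))" unfolding n_def using ex by (rule LeastI_ex)
  have n2: "\<forall>k<n. \<not> in_band q lo hi (bis_mid (bis_iter q lo hi \<rho>0 k))" unfolding n_def using not_less_Least by blast
  have "Inv n (bis_iter q lo hi \<rho>0 n)" using inv n2 by blast
  then have "0 < bis_mid (bis_iter q lo hi \<rho>0 n)" unfolding Inv_def bis_mid_def using init
    by (auto intro!: mult_pos_pos)
  then show ?thesis unfolding bisection_returns_def using nb n1 n2 by blast
qed

theorem proposition5p8:
  fixes A :: "'b::{real_inner, complete_space} \<Rightarrow> 'b set"
    and B C D :: "'b \<Rightarrow> 'b"
    and D' :: "'b \<Rightarrow> 'b \<Rightarrow>\<^sub>L 'b"
    and G :: "'a::{real_inner, complete_space} \<Rightarrow> 'b"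
    and l binv m dhat th_lo th_hi \<rho>0 :: real
    and z :: 'a and w :: 'b
  assumes A_mm: "maximal_monotone A"
    and B_mono: "\<forall>x y. 0 \<le> inner (x - y) (B x - B y)"
    and l_nonneg: "0 \<le> l"
    and B_lip: "\<forall>x y. norm (B x - B y) \<le> l * norm (x - y)"
    and binv_nonneg: "0 \<le> binv"
    and C_cocoercive: "\<forall>x y. norm (C x - C y)^2 \<le> binv * inner (x - y) (C x - C y)"
    and D_mono: "\<forall>x y. 0 \<le> inner (x - y) (D x - D y)"
    and D_deriv: "\<forall>u. (D has_derivative blinfun_apply (D' u)) (at u)"
    and D'_lip: "\<forall>u v. norm (D' u - D' v) \<le> m * norm (u - v)"
    and G_lin: "bounded_linear G"
    and m_pos: "0 < m"
    and dhat_pos: "0 < dhat"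
    and th_pos: "0 < th_lo" and th_lt: "th_lo < th_hi"
    and w_notin: "w \<notin> {a + B (G z) + C (G z) + D (G z) | a. a \<in> A (G z)}"
    and rho0_pos: "0 < \<rho>0"
  shows "\<exists>\<rho> x y.
     bisection_returns (qfun l binv dhat m (G z) (xfun A B C D D' G z w)) th_lo th_hi \<rho>0 \<rho> \<and>
     x = xfun A B C D D' G z w \<rho> \<and>
     y = (1 / \<rho>) *\<^sub>R (G z - x) + w + (B x - B (G z)) + (D x - linearize D D' (G z) x) \<and>
     0 < \<rho> \<and>
     x = resolvent (scaled_sum_op \<rho> A (linearize D D' (G z)))
           (G z + \<rho> *\<^sub>R w - \<rho> *\<^sub>R (B (G z) + C (G z))) \<and>
     (G z + \<rho> *\<^sub>R w - \<rho> *\<^sub>R (B (G z) + C (G z))) - x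
        \<in> scaled_sum_op \<rho> A (linearize D D' (G z)) x \<and>
     th_lo \<le> 4 * l^2 * \<rho>^2 + (binv + dhat) * \<rho> + (m * \<rho> * norm (x - G z))^2 \<and>
     4 * l^2 * \<rho>^2 + (binv + dhat) * \<rho> + (m * \<rho> * norm (x - G z))^2 \<le> th_hi"
proof -
  define u where "u = G z"
  define T where "T = D' u"
  define k where "k = D u - T u"
  define v where "v = w - (B u + C u)"
  define L where "L = linearize D D' u"
  define X where "X = xfun A B C D D' G z w"
  have mo: "monotone_op A" using A_mm unfolding maximal_monotone_def by simp
  have Tmono: "\<forall>h. 0 \<le> inner h (T h)"
    unfolding T_def using deriv_mono[OF D_mono D_deriv[rule_format]] by blast
  have Lx: "\<forall>x. L x = T x + k" unfolding L_def linearize_def k_def T_def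
    by (simp add: blinfun.diff_right)
  have arg: "\<And>\<rho>. G z + \<rho> *\<^sub>R w - \<rho> *\<^sub>R (B (G z) + C (G z)) = u + \<rho> *\<^sub>R v"
    unfolding u_def v_def by (simp add: algebra_simps)
  have Xr: "\<And>\<rho>. X \<rho> = resolvent (scaled_sum_op \<rho> A L) (u + \<rho> *\<^sub>R v)"
    unfolding X_def xfun_def L_def arg u_def ..
  have ch1: "\<And>\<rho>. 0 < \<rho> \<Longrightarrow> (u + \<rho> *\<^sub>R v) - X \<rho> \<in> scaled_sum_op \<rho> A L (X \<rho>)"
    unfolding Xr by (rule resolvent_char(1)[OF A_mm Tmono _ Lx])
  have ch2: "\<And>\<rho>. 0 < \<rho> \<Longrightarrow> (1/\<rho>) *\<^sub>R (u + \<rho> *\<^sub>R v - X \<rho>) - T (X \<rho>) - k \<in> A (X \<rho>)"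
    unfolding Xr by (rule resolvent_char(2)[OF A_mm Tmono _ Lx])
  have key: "\<And>r1 r2. 0 < r1 \<Longrightarrow> 0 < r2 \<Longrightarrow>
      0 \<le> inner ((X r1 - u) - (X r2 - u)) ((1/r2) *\<^sub>R (X r2 - u) - (1/r1) *\<^sub>R (X r1 - u))"
    by (rule key_ineq[OF mo Tmono ch2 ch2])
  have nmono: "\<And>r1 r2. 0 < r1 \<Longrightarrow> r1 \<le> r2 \<Longrightarrow> norm (X r1 - u) \<le> norm (X r2 - u)"
    by (rule key_mono[OF key]) auto
  have bnd: "\<And>r1 r2. 0 < r1 \<Longrightarrow> 0 < r2 \<Longrightarrow> norm (X r1 - X r2) \<le> \<bar>r1 - r2\<bar> * norm (X r1 - u) / r1"
  proof -
    fix r1 r2 :: real assume r: "0 < r1" "0 < r2"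
    have "norm ((X r1 - u) - (X r2 - u)) \<le> \<bar>r1 - r2\<bar> * norm (X r1 - u) / r1"
      by (rule key_bound[OF key[OF r] r])
    then show "norm (X r1 - X r2) \<le> \<bar>r1 - r2\<bar> * norm (X r1 - u) / r1" by simp
  qed
  have Xcont: "continuous_on {0<..} X"
  proof (rule continuous_at_imp_continuous_on, rule ballI)
    fix r1 :: real assume "r1 \<in> {0<..}"
    then have r1: "0 < r1" by simp
    define N where "N = norm (X r1 - u)"
    have N: "0 \<le> N" unfolding N_def by simp
    show "isCont X r1" unfolding continuous_at_eps_delta
    proof (intro allI impI)
      fix e :: real assume e: "0 < e"
      define d where "d = min (r1/2) (e * r1 / (N + 1))"
      have d: "0 < d" unfolding d_def using r1 e N by simp
      show "\<exists>d>0. \<forall>y. dist y r1 < d \<longrightarrow> dist (X y) (X r1) < e"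
      proof (intro exI conjI allI impI)
        show "0 < d" by (rule d)
        fix y assume "dist y r1 < d"
        then have yd: "\<bar>r1 - y\<bar> < d" by (simp add: dist_real_def abs_minus_commute)
        have "\<bar>r1 - y\<bar> < r1/2" using yd unfolding d_def by auto
        then have y: "0 < y" unfolding abs_less_iff by linarith
        have "dist (X y) (X r1) = norm (X r1 - X y)" by (simp add: dist_norm norm_minus_commute)
        also have "\<dots> \<le> \<bar>r1 - y\<bar> * N / r1" unfolding N_def by (rule bnd[OF r1 y])
        also have "\<dots> \<le> d * N / r1" using yd N r1 by (intro divide_right_mono mult_right_mono) auto
        also have "\<dots> \<le> (e * r1 / (N + 1)) * N / r1" unfolding d_def using N r1
          by (intro divide_right_mono mult_right_mono) auto
        also have "\<dots> = e * (N / (N + 1))"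
        proof -
          have "N + 1 \<noteq> 0" using N by simp
          moreover have "0 < r1 + N * r1" using N r1 by (simp add: add_pos_nonneg)
          ultimately show ?thesis using r1 by (simp add: field_simps)
        qed
        also have "\<dots> < e"
        proof -
          have "N / (N + 1) < 1" using N by simp
          then have "e * (N / (N + 1)) < e * 1" using e by (intro mult_strict_left_mono) auto
          then show ?thesis by simp
        qed
        finally show "dist (X y) (X r1) < e" .
      qed
    qed
  qed
  define q where "q = qfun l binv dhat m u X"
  have qexp: "\<And>r. q r = 4 * l^2 * r^2 + (binv + dhat) * r + (m * r * norm (X r - u))^2"
    unfolding q_def qfun_def ..
  have qcont: "continuous_on {0<..} q" unfolding q_def qfun_def
    by (intro continuous_intros Xcont)
  have qpos: "\<And>r. 0 < r \<Longrightarrow> 0 < q r"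
  proof -
    fix r :: real assume r: "0 < r"
    have "0 < (binv + dhat) * r" using binv_nonneg dhat_pos r by simp
    moreover have "0 \<le> 4 * l^2 * r^2" by simp
    moreover have "0 \<le> (m * r * norm (X r - u))^2" by simp
    ultimately show "0 < q r" unfolding qexp by linarith
  qed
  have qm: "\<And>r1 r2. 0 < r1 \<Longrightarrow> r1 \<le> r2 \<Longrightarrow> q r1 / r1 \<le> q r2 / r2"
  proof -
    have qd: "\<And>r. 0 < r \<Longrightarrow> q r / r = 4 * l^2 * r + (binv + dhat) + m^2 * (r * (norm (X r - u))^2)"
      unfolding qexp by (simp add: field_simps power2_eq_square)
    fix r1 r2 :: real assume r: "0 < r1" "r1 \<le> r2"
    have r2: "0 < r2" using r by simp
    have "4 * l^2 * r1 \<le> 4 * l^2 * r2" using r by (intro mult_left_mono) auto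
    moreover have "m^2 * (r1 * (norm (X r1 - u))^2) \<le> m^2 * (r2 * (norm (X r2 - u))^2)"
    proof -
      have "(norm (X r1 - u))^2 \<le> (norm (X r2 - u))^2" using nmono[OF r] by (intro power_mono) auto
      then have "r1 * (norm (X r1 - u))^2 \<le> r2 * (norm (X r2 - u))^2" using r by (intro mult_mono) auto
      then show ?thesis by (intro mult_left_mono) auto
    qed
    ultimately show "q r1 / r1 \<le> q r2 / r2" unfolding qd[OF r(1)] qd[OF r2] by linarith
  qed
  obtain \<rho> where br: "bisection_returns q th_lo th_hi \<rho>0 \<rho>" and rpos: "0 < \<rho>" and ib: "in_band q th_lo th_hi \<rho>"
    using bisection_terminates[OF qcont qpos qm th_pos th_lt rho0_pos] by blast
  have res: "X \<rho> = resolvent (scaled_sum_op \<rho> A (linearize D D' (G z))) (G z + \<rho> *\<^sub>R w - \<rho> *\<^sub>R (B (G z) + C (G z)))"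
    unfolding X_def xfun_def ..
  have mem: "(G z + \<rho> *\<^sub>R w - \<rho> *\<^sub>R (B (G z) + C (G z))) - X \<rho> \<in> scaled_sum_op \<rho> A (linearize D D' (G z)) (X \<rho>)"
    using ch1[OF rpos] unfolding arg L_def u_def .
  have f: "th_lo \<le> 4 * l^2 * \<rho>^2 + (binv + dhat) * \<rho> + (m * \<rho> * norm (X \<rho> - u))^2"
     "4 * l^2 * \<rho>^2 + (binv + dhat) * \<rho> + (m * \<rho> * norm (X \<rho> - u))^2 \<le> th_hi"
    using ib unfolding in_band_def qexp by auto
  have br': "bisection_returns (qfun l binv dhat m u X) th_lo th_hi \<rho>0 \<rho>" using br unfolding q_def .
  show ?thesis
    unfolding u_def[symmetric] X_def[symmetric]
    using br' f rpos res mem unfolding u_def[symmetric] X_def[symmetric]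
    by (intro exI[of _ \<rho>] exI[of _ "X \<rho>"] exI conjI) auto
qed

end
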